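(* Let $U\subseteq\mathbb{E}^s$ be a Pseudo-Riemannian affine homogeneous domain and let $G\le \mathrm{Isom}(U)$ be a subgroup having an open orbit in $\mathbb{R}^n$. Then the centraliser $Z$ of $G$ in $E(s)$ is a connected unipotent group which is nilpotent of class at most two, and every $g\in Z$ satisfies $(g-I_{n+1})^2=0$.
   Context: $\mathbb{E}^s=(\mathbb{R}^n,\langle\cdot,\cdot\rangle_s)$ is pseudo-Euclidean space with a scalar product of signature $s$, and $E(s)=\mathbb{R}^n\rtimes O(s)$ its isometry group, viewed in $\mathrm{Aff}(n)\subset GL(n+1,\mathbb{R})$ via $\begin{pmatrix} g&t\\0&1\end{pmatrix}$. A Pseudo-Riemannian affine homogeneous domain is a connected open $U\subseteq\mathbb{R}^n$ such that $\mathrm{Isom}(U)=\{A\in E(s):A(U)=U\}$ acts transitively on $U$. $I_{n+1}$ is the identity matrix. *)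

theory Defs
  imports "HOL-Analysis.Analysis"
begin

text \<open>Pseudo-Euclidean space: R^n (index type 'n) with the scalar product
  <x,y>_S = x^T S y, S a symmetric invertible matrix (signature arbitrary).\<close>

definition pseudo_scalar_product :: "real^'n^'n \<Rightarrow> bool" where
  "pseudo_scalar_product S \<longleftrightarrow> transpose S = S \<and> invertible S"

definition orth_group :: "real^'n^'n \<Rightarrow> (real^'n^'n) set" where
  "orth_group S = {g. transpose g ** S ** g = S}"

text \<open>Embedding of Aff(n) into GL(n+1): the extra coordinate is None.\<close>
definition aff_mat :: "real^'n^'n \<Rightarrow> real^'n \<Rightarrow> real^('n::finite option)^('n option)" where
  "aff_mat g t = (\<chi> i j. case i of
       Some a \<Rightarrow> (case j of Some b \<Rightarrow> g $ a $ b | None \<Rightarrow> t $ a)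
     | None \<Rightarrow> (case j of Some b \<Rightarrow> 0 | None \<Rightarrow> 1))"

definition E_group :: "real^'n^'n \<Rightarrow> (real^('n::finite option)^('n option)) set" where
  "E_group S = {aff_mat g t | g t. g \<in> orth_group S}"

definition aff_apply :: "real^('n::finite option)^('n option) \<Rightarrow> real^'n \<Rightarrow> real^'n" where
  "aff_apply A x = (\<chi> a. (\<Sum>b\<in>UNIV. A $ Some a $ Some b * x $ b) + A $ Some a $ None)"

definition Isom :: "real^'n^'n \<Rightarrow> (real^'n) set \<Rightarrow> (real^('n::finite option)^('n option)) set" where
  "Isom S U = {A \<in> E_group S. aff_apply A ` U = U}"

definition PR_affine_homogeneous_domain :: "real^'n^'n \<Rightarrow> (real^'n) set \<Rightarrow> bool" where
  "PR_affine_homogeneous_domain S U \<longleftrightarrow>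
     open U \<and> connected U \<and> U \<noteq> {} \<and>
     (\<forall>x\<in>U. \<forall>y\<in>U. \<exists>A\<in>Isom S U. aff_apply A x = y)"

definition matrix_subgroup :: "(real^'m^'m) set \<Rightarrow> (real^'m^'m) set \<Rightarrow> bool" where
  "matrix_subgroup G H \<longleftrightarrow> G \<subseteq> H \<and> mat 1 \<in> G \<and>
     (\<forall>A\<in>G. \<forall>B\<in>G. A ** B \<in> G) \<and> (\<forall>A\<in>G. invertible A \<and> matrix_inv A \<in> G)"

definition has_open_orbit :: "(real^('n::finite option)^('n option)) set \<Rightarrow> bool" where
  "has_open_orbit G \<longleftrightarrow> (\<exists>x::real^'n. open ((\<lambda>A. aff_apply A x) ` G))"

definition centraliser :: "(real^'m^'m) set \<Rightarrow> (real^'m^'m) set \<Rightarrow> (real^'m^'m) set" where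
  "centraliser G H = {A \<in> H. \<forall>B\<in>G. A ** B = B ** A}"

definition unipotent_matrix :: "real^'m^'m \<Rightarrow> bool" where
  "unipotent_matrix A \<longleftrightarrow> (\<exists>k. (((**) (A - mat 1)) ^^ k) (mat 1) = 0)"

definition unipotent_group :: "(real^'m^'m) set \<Rightarrow> bool" where
  "unipotent_group Z \<longleftrightarrow> (\<forall>A\<in>Z. unipotent_matrix A)"

definition commutator :: "real^'m^'m \<Rightarrow> real^'m^'m \<Rightarrow> real^'m^'m" where
  "commutator A B = A ** B ** matrix_inv A ** matrix_inv B"

definition nilpotent_class_le_two :: "(real^'m^'m) set \<Rightarrow> bool" where
  "nilpotent_class_le_two Z \<longleftrightarrow>
     (\<forall>A\<in>Z. \<forall>B\<in>Z. \<forall>C\<in>Z. commutator (commutator A B) C = mat 1)"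

end

theory Submission
  imports Defs
begin

lemma sum_option: "(\<Sum>i\<in>(UNIV::'a::finite option set). f i) = f None + (\<Sum>i\<in>UNIV. f (Some i))"
  by (simp add: UNIV_option_conv sum.reindex)
lemma aff_apply_aff: "aff_apply (aff_mat g t) x = g *v x + t"
  by (simp add: vec_eq_iff aff_apply_def aff_mat_def matrix_vector_mult_def)
lemma aff_inj: assumes "aff_mat g t = aff_mat g' t'" shows "g = g' \<and> t = t'"
proof -
  have "aff_mat g t $ Some a $ Some b = aff_mat g' t' $ Some a $ Some b" for a b using assms by simp
  hence 1: "g $ a $ b = g' $ a $ b" for a b by (simp add: aff_mat_def)
  have "aff_mat g t $ Some a $ None = aff_mat g' t' $ Some a $ None" for a using assms by simp
  hence 2: "t $ a = t' $ a" for a by (simp add: aff_mat_def)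
  show ?thesis using 1 2 by (simp add: vec_eq_iff)
qed
lemma mat1_aff: "(mat 1 :: real^('n::finite option)^('n option)) = aff_mat (mat 1) 0"
  by (auto simp: vec_eq_iff aff_mat_def mat_def split: option.splits)
lemma aff_lin: "mat 1 + s *\<^sub>R (aff_mat h c - mat 1) = aff_mat (mat 1 + s *\<^sub>R (h - mat 1)) (s *\<^sub>R c)"
  by (auto simp: vec_eq_iff aff_mat_def mat_def split: option.splits)
lemma aff_mult: "aff_mat g t ** aff_mat g' t' = aff_mat (g ** g') (g *v t' + t)"
  by (auto simp: vec_eq_iff aff_mat_def matrix_matrix_mult_def matrix_vector_mult_def sum_option
      split: option.splits)

lemma matrix_add_rdistrib: "((A::real^'m^'n) + B) ** C = A ** C + B ** C"
  by (vector matrix_matrix_mult_def sum.distrib[symmetric] field_simps)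
lemma matrix_sub_ldistrib: "(A::real^'m^'n) ** (B - C) = A ** B - A ** C"
  by (vector matrix_matrix_mult_def sum_subtractf[symmetric] field_simps)
lemma matrix_sub_rdistrib: "((A::real^'m^'n) - B) ** C = A ** C - B ** C"
  by (vector matrix_matrix_mult_def sum_subtractf[symmetric] field_simps)
lemma matrix_neg_l: "(- (A::real^'m^'n)) ** C = - (A ** C)"
  by (vector matrix_matrix_mult_def sum_negf[symmetric])
lemma matrix_neg_r: "(A::real^'m^'n) ** (- C) = - (A ** C)"
  by (vector matrix_matrix_mult_def sum_negf[symmetric])

lemmas mdist = matrix_add_rdistrib matrix_sub_ldistrib matrix_sub_rdistrib matrix_neg_l matrix_neg_r
  matrix_add_ldistrib matrix_mul_assoc

lemma inv_unique: assumes "(A::real^'m^'m) ** B = mat 1" "B ** A = mat 1"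
  shows "invertible A" "matrix_inv A = B"
proof -
  show "invertible A" using assms invertible_def by blast
  have m: "A ** matrix_inv A = mat 1 \<and> matrix_inv A ** A = mat 1"
    unfolding matrix_inv_def by (rule someI[of _ B]) (use assms in auto)
  have "B = (matrix_inv A ** A) ** B" using m by simp
  also have "\<dots> = matrix_inv A" by (simp add: assms(1) flip: matrix_mul_assoc)
  finally show "matrix_inv A = B" by simp
qed

lemma two_eq: fixes K :: "real^'m^'m" shows "K + K = 0 \<Longrightarrow> K = 0"
  by (metis scaleR_2 scaleR_eq_0_iff zero_neq_numeral)

lemma anticomm: fixes X Y :: "real^'m^'m"
  assumes x: "X ** X = 0" and y: "Y ** Y = 0"
  and e1: "(X+Y+X**Y)**(X+Y+X**Y) = 0"
  and e2: "(-X+Y+(-X)**Y)**(-X+Y+(-X)**Y) = 0"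
  and e3: "(X-Y+X**(-Y))**(X-Y+X**(-Y)) = 0"
  and e4: "(-X-Y+(-X)**(-Y))**(-X-Y+(-X)**(-Y)) = 0"
  shows "X ** Y + Y ** X = 0"
proof -
  define K1 where "K1 = X ** Y + Y ** X"
  define K2 where "K2 = Y ** X ** Y"
  define K3 where "K3 = X ** Y ** X"
  define K4 where "K4 = X ** Y ** X ** Y"
  have x3: "M ** X ** X = 0" for M using x by (simp flip: matrix_mul_assoc)
  have y3: "M ** Y ** Y = 0" for M using y by (simp flip: matrix_mul_assoc)
  have f1: "K1+K2+K3+K4 = 0" using e1 unfolding K1_def K2_def K3_def K4_def
    by (simp add: mdist x y x3 y3 algebra_simps)
  have f2: "-K1-K2+K3+K4 = 0" using e2 unfolding K1_def K2_def K3_def K4_def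
    by (simp add: mdist x y x3 y3 algebra_simps)
  have f3: "-K1+K2-K3+K4 = 0" using e3 unfolding K1_def K2_def K3_def K4_def
    by (simp add: mdist x y x3 y3 algebra_simps)
  have f4: "K1-K2-K3+K4 = 0" using e4 unfolding K1_def K2_def K3_def K4_def
    by (simp add: mdist x y x3 y3 algebra_simps)
  have "(K1 + K4) + (K1 + K4) = 0"
  proof -
    have "(K1 + K4) + (K1 + K4) = (K1+K2+K3+K4) + (K1-K2-K3+K4)" by (simp add: algebra_simps)
    thus ?thesis using f1 f4 by simp
  qed
  hence a: "K1 + K4 = 0" by (rule two_eq)
  have "(K4 - K1) + (K4 - K1) = 0"
  proof -
    have "(K4 - K1) + (K4 - K1) = (-K1-K2+K3+K4) + (-K1+K2-K3+K4)" by (simp add: algebra_simps)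
    thus ?thesis using f2 f3 by simp
  qed
  hence b: "K4 - K1 = 0" by (rule two_eq)
  have "K4 = K1" using b by simp
  hence "K1 + K1 = 0" using a by simp
  hence "K1 = 0" by (rule two_eq)
  thus ?thesis by (simp add: K1_def)
qed

locale Zgrp =
  fixes Z :: "(real^'m^'m) set"
  assumes sq: "\<And>A. A\<in>Z \<Longrightarrow> (A - mat 1)**(A - mat 1) = 0"
   and sc: "\<And>A s. A\<in>Z \<Longrightarrow> mat 1 + s *\<^sub>R (A - mat 1) \<in> Z"
   and mul: "\<And>A B. A\<in>Z \<Longrightarrow> B\<in>Z \<Longrightarrow> A**B \<in> Z"
begin

lemma sq': "A\<in>Z \<Longrightarrow> M ** (A - mat 1) ** (A - mat 1) = 0"
proof -
  assume "A \<in> Z"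
  hence "M ** ((A - mat 1) ** (A - mat 1)) = 0" using sq by simp
  thus ?thesis by (simp only: matrix_mul_assoc)
qed

lemma neg: "A\<in>Z \<Longrightarrow> mat 1 - (A - mat 1) \<in> Z"
  using sc[of A "-1"] by simp

lemma inv: assumes "A\<in>Z" shows "A ** (mat 1 - (A - mat 1)) = mat 1" "(mat 1 - (A - mat 1)) ** A = mat 1"
proof -
  define X where "X = A - mat 1"
  have A: "A = mat 1 + X" by (simp add: X_def)
  have x: "X ** X = 0" using sq assms X_def by simp
  show "A ** (mat 1 - (A - mat 1)) = mat 1" "(mat 1 - (A - mat 1)) ** A = mat 1"
    unfolding X_def[symmetric] unfolding A by (simp_all add: mdist x)
qed

lemma anti: assumes "A\<in>Z" "B\<in>Z" shows "(A - mat 1) ** (B - mat 1) + (B - mat 1) ** (A - mat 1) = 0"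
proof -
  define X where "X = A - mat 1"
  define Y where "Y = B - mat 1"
  have A: "A = mat 1 + X" by (simp add: X_def)
  have B: "B = mat 1 + Y" by (simp add: Y_def)
  have A': "mat 1 - X \<in> Z" using neg assms X_def by simp
  have B': "mat 1 - Y \<in> Z" using neg assms Y_def by simp
  have e1: "(A**B - mat 1) ** (A**B - mat 1) = 0" using sq[OF mul[OF assms]] by simp
  have e2: "((mat 1 - X)**B - mat 1) ** ((mat 1 - X)**B - mat 1) = 0" using sq[OF mul[OF A' assms(2)]] by simp
  have e3: "(A**(mat 1 - Y) - mat 1) ** (A**(mat 1 - Y) - mat 1) = 0" using sq[OF mul[OF assms(1) B']] by simp
  have e4: "((mat 1 - X)**(mat 1 - Y) - mat 1) ** ((mat 1 - X)**(mat 1 - Y) - mat 1) = 0"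
    using sq[OF mul[OF A' B']] by simp
  have "X ** Y + Y ** X = 0"
  proof (rule anticomm)
    show "X ** X = 0" using sq assms X_def by simp
    show "Y ** Y = 0" using sq assms Y_def by simp
    show "(X+Y+X**Y)**(X+Y+X**Y) = 0" using e1 unfolding A B by (simp add: mdist algebra_simps)
    show "(-X+Y+(-X)**Y)**(-X+Y+(-X)**Y) = 0" using e2 unfolding B by (simp add: mdist algebra_simps)
    show "(X-Y+X**(-Y))**(X-Y+X**(-Y)) = 0" using e3 unfolding A by (simp add: mdist algebra_simps)
    show "(-X-Y+(-X)**(-Y))**(-X-Y+(-X)**(-Y)) = 0" using e4 by (simp add: mdist algebra_simps)
  qed
  thus ?thesis by (simp add: X_def Y_def)
qed

lemma antiM: assumes "A\<in>Z" "B\<in>Z" shows "M ** (B - mat 1) ** (A - mat 1) = - (M ** (A - mat 1) ** (B - mat 1))"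
proof -
  have "(B - mat 1) ** (A - mat 1) = - ((A - mat 1) ** (B - mat 1))"
    using anti[OF assms] by (simp add: add_eq_0_iff)
  hence "M ** ((B - mat 1) ** (A - mat 1)) = - (M ** ((A - mat 1) ** (B - mat 1)))"
    by (simp add: matrix_neg_r)
  thus ?thesis by (simp only: matrix_mul_assoc)
qed

end

lemma zM: "(P::real^'m^'m) ** W = 0 \<Longrightarrow> M ** P ** W = 0"
proof -
  assume "P ** W = 0"
  hence "M ** (P ** W) = 0" by simp
  thus ?thesis by (simp only: matrix_mul_assoc)
qed

context Zgrp begin

lemma triple: assumes a: "A\<in>Z" and b: "B\<in>Z" and c: "C\<in>Z"
  shows "(A - mat 1) ** (B - mat 1) ** (C - mat 1) = 0"
    "(C - mat 1) ** (A - mat 1) ** (B - mat 1) = 0"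
proof -
  define X where "X = A - mat 1"
  define Y where "Y = B - mat 1"
  define W where "W = C - mat 1"
  have A: "A = mat 1 + X" by (simp add: X_def)
  have B: "B = mat 1 + Y" by (simp add: Y_def)
  have ab: "A ** B \<in> Z" using mul a b by blast
  have "(A**B - mat 1) ** W + W ** (A**B - mat 1) = 0" using anti[OF ab c] W_def by simp
  moreover have "A**B - mat 1 = X + Y + X ** Y" unfolding A B by (simp add: mdist)
  ultimately have "(X + Y + X ** Y) ** W + W ** (X + Y + X ** Y) = 0" by simp
  hence e: "(X ** W + W ** X) + (Y ** W + W ** Y) + (X ** Y ** W + W ** X ** Y) = 0"
    by (simp add: mdist algebra_simps)
  have xw: "X ** W + W ** X = 0" using anti[OF a c] X_def W_def by simp
  have yw: "Y ** W + W ** Y = 0" using anti[OF b c] Y_def W_def by simp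
  have e2: "X ** Y ** W + W ** X ** Y = 0" using e xw yw by simp
  have "W ** X = - (X ** W)" using xw by (simp add: add_eq_0_iff)
  hence "W ** X ** Y = - (X ** W ** Y)" by (simp add: matrix_neg_l)
  also have "X ** W ** Y = - (X ** Y ** W)" using antiM[OF b c, of X] Y_def W_def by simp
  finally have wxy: "W ** X ** Y = X ** Y ** W" by simp
  have "X ** Y ** W + X ** Y ** W = 0" using e2 wxy by simp
  hence "X ** Y ** W = 0" by (rule two_eq)
  thus "(A - mat 1) ** (B - mat 1) ** (C - mat 1) = 0" "(C - mat 1) ** (A - mat 1) ** (B - mat 1) = 0"
    using wxy X_def Y_def W_def by simp_all
qed

lemma invZ: "A\<in>Z \<Longrightarrow> invertible A \<and> matrix_inv A = mat 1 - (A - mat 1)"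
  using inv inv_unique by blast

lemma commZ: "A\<in>Z \<Longrightarrow> B\<in>Z \<Longrightarrow> commutator A B \<in> Z"
  unfolding commutator_def using invZ neg mul by metis

lemma comm_formula: assumes a: "A\<in>Z" and b: "B\<in>Z"
  shows "commutator A B = mat 1 + ((A - mat 1) ** (B - mat 1) + (A - mat 1) ** (B - mat 1))"
proof -
  define X where "X = A - mat 1"
  define Y where "Y = B - mat 1"
  have A: "A = mat 1 + X" by (simp add: X_def)
  have B: "B = mat 1 + Y" by (simp add: Y_def)
  have xx: "X ** X = 0" "M ** X ** X = 0" for M using sq[OF a] sq'[OF a] X_def by simp_all
  have yy: "Y ** Y = 0" "M ** Y ** Y = 0" for M using sq[OF b] sq'[OF b] Y_def by simp_all
  have yx: "Y ** X = - (X ** Y)" using anti[OF a b] X_def Y_def by (simp add: add_eq_0_iff)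
  have yxM: "M ** Y ** X = - (M ** X ** Y)" for M using antiM[OF a b] X_def Y_def by simp
  have iA: "matrix_inv A = mat 1 - X" using invZ[OF a] X_def by simp
  have iB: "matrix_inv B = mat 1 - Y" using invZ[OF b] Y_def by simp
  have "commutator A B = A ** B ** (mat 1 - X) ** (mat 1 - Y)"
    by (simp add: commutator_def iA iB)
  also have "\<dots> = (mat 1 + X) ** (mat 1 + Y) ** (mat 1 - X) ** (mat 1 - Y)"
    by (simp only: A B)
  also have "\<dots> = mat 1 + (X ** Y + X ** Y)"
    apply (simp only: mdist matrix_mul_lid matrix_mul_rid xx yy yx yxM times0_left times0_right
       matrix_neg_l matrix_neg_r minus_minus neg_equal_0_iff_equal minus_zero diff_0_right diff_0 add_0_right add_0_left)
    by (simp add: algebra_simps)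
  finally show ?thesis using X_def Y_def by simp
qed

lemma nil2: "nilpotent_class_le_two Z"
  unfolding nilpotent_class_le_two_def
proof (intro ballI)
  fix A B C assume a: "A\<in>Z" and b: "B\<in>Z" and c: "C\<in>Z"
  define D where "D = commutator A B"
  have d: "D \<in> Z" using commZ a b D_def by simp
  define P where "P = D - mat 1"
  define W where "W = C - mat 1"
  define X where "X = A - mat 1"
  define Y where "Y = B - mat 1"
  have P: "P = X ** Y + X ** Y"
    using comm_formula[OF a b] P_def D_def X_def Y_def by simp
  have t1: "X ** Y ** W = 0" and t2: "W ** X ** Y = 0" using triple[OF a b c] X_def Y_def W_def by simp_all
  have pw: "P ** W = 0" unfolding P by (simp only: matrix_add_rdistrib t1) simp
  have wp: "W ** P = 0" unfolding P by (simp only: matrix_add_ldistrib matrix_mul_assoc t2) simp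
  have pp: "P ** P = 0" using sq[OF d] P_def by simp
  have ww: "W ** W = 0" using sq[OF c] W_def by simp
  have iD: "matrix_inv D = mat 1 - P" using invZ[OF d] P_def by simp
  have iC: "matrix_inv C = mat 1 - W" using invZ[OF c] W_def by simp
  have D: "D = mat 1 + P" by (simp add: P_def)
  have C: "C = mat 1 + W" by (simp add: W_def)
  have "commutator D C = D ** C ** (mat 1 - P) ** (mat 1 - W)"
    by (simp add: commutator_def iD iC)
  also have "\<dots> = (mat 1 + P) ** (mat 1 + W) ** (mat 1 - P) ** (mat 1 - W)"
    by (simp only: D C)
  also have "\<dots> = mat 1"
    by (simp add: mdist pw wp pp ww zM[OF pw] zM[OF wp] zM[OF pp] zM[OF ww])
  finally show "commutator (commutator A B) C = mat 1" using D_def by simp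
qed

lemma unip: "unipotent_group Z"
  unfolding unipotent_group_def unipotent_matrix_def
proof
  fix A assume "A \<in> Z"
  hence "(((**) (A - mat 1)) ^^ 2) (mat 1) = 0" using sq by (simp add: numeral_2_eq_2)
  thus "\<exists>k. (((**) (A - mat 1)) ^^ k) (mat 1) = 0" by blast
qed

lemma conn: "connected Z"
proof -
  have seg: "closed_segment (mat 1) A \<subseteq> Z" if "A \<in> Z" for A
  proof
    fix x assume "x \<in> closed_segment (mat 1) A"
    then obtain u where "x = (1 - u) *\<^sub>R mat 1 + u *\<^sub>R A" by (auto simp: closed_segment_def)
    hence "x = mat 1 + u *\<^sub>R (A - mat 1)" by (simp add: algebra_simps)
    thus "x \<in> Z" using sc that by simp
  qed
  have "Z = \<Union>((\<lambda>A. closed_segment (mat 1) A) ` Z)" using seg by auto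
  moreover have "connected (\<Union>((\<lambda>A. closed_segment (mat 1) A) ` Z))"
    by (rule connected_Union) auto
  ultimately show ?thesis by simp
qed

end


definition bf :: "real^'n^'n \<Rightarrow> real^'n \<Rightarrow> real^'n \<Rightarrow> real" where
  "bf S u w = inner u (S *v w)"

lemma bf_sym: "transpose S = S \<Longrightarrow> bf S u w = bf S w u"
proof -
  assume t: "transpose S = S"
  have "inner u (S *v w) = inner (u v* S) w" by (simp add: dot_lmul_matrix)
  also have "u v* S = S *v u" using transpose_matrix_vector[of S u] t by simp
  finally show ?thesis by (simp add: bf_def inner_commute)
qed

lemma smv: "((s::real) *\<^sub>R (N::real^'n^'m)) *v u = s *\<^sub>R (N *v u)"
  by (simp only: matrix_scaleR_vector_ac[symmetric] matrix_vector_mult_scaleR)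

lemma bf_simps:
  "bf S (a + b) w = bf S a w + bf S b w"
  "bf S u (a + b) = bf S u a + bf S u b"
  "bf S (a - b) w = bf S a w - bf S b w"
  "bf S u (a - b) = bf S u a - bf S u b"
  "bf S (k *\<^sub>R a) w = k * bf S a w"
  "bf S u (k *\<^sub>R w) = k * bf S u w"
  "bf S 0 w = 0" "bf S u 0 = 0"
  by (simp_all add: bf_def inner_add_left inner_add_right inner_diff_left inner_diff_right
      matrix_vector_right_distrib matrix_vector_mult_diff_distrib matrix_vector_mult_scaleR)

lemma orth_bf: "g \<in> orth_group S \<Longrightarrow> bf S (g *v u) (g *v w) = bf S u w"
proof -
  assume "g \<in> orth_group S"
  hence o: "transpose g ** S ** g = S" by (simp add: orth_group_def)
  have "bf S (g *v u) (g *v w) = inner (u v* transpose g) (S *v (g *v w))" by (simp add: bf_def)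
  also have "\<dots> = inner u (transpose g *v (S *v (g *v w)))" by (rule dot_lmul_matrix)
  also have "\<dots> = inner u ((transpose g ** S ** g) *v w)" by (simp add: matrix_vector_mul_assoc matrix_mul_assoc)
  finally show ?thesis using o by (simp add: bf_def)
qed

lemma bf_orth: assumes "\<And>u w. bf S (g *v u) (g *v w) = bf S u w" shows "g \<in> orth_group S"
proof -
  have "(transpose g ** S ** g) *v w = S *v w" for w
  proof -
    have "inner u ((transpose g ** S ** g) *v w) = inner u (S *v w)" for u
    proof -
      have "inner u ((transpose g ** S ** g) *v w) = inner u (transpose g *v (S *v (g *v w)))"
        by (simp add: matrix_vector_mul_assoc matrix_mul_assoc)
      also have "\<dots> = inner (u v* transpose g) (S *v (g *v w))" by (rule dot_lmul_matrix[symmetric])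
      also have "\<dots> = bf S (g *v u) (g *v w)" by (simp only: bf_def vector_transpose_matrix)
      also have "\<dots> = bf S u w" by (rule assms)
      finally show ?thesis by (simp add: bf_def)
    qed
    hence "inner d d = 0" if "d = (transpose g ** S ** g) *v w - S *v w" for d
      using that by (simp add: inner_diff_left inner_diff_right)
    thus ?thesis by simp
  qed
  thus ?thesis by (simp add: orth_group_def matrix_eq)
qed

lemma bf_zero: assumes "invertible S" "\<And>u. bf S u z = 0" shows "z = 0"
proof -
  have "inner (S *v z) (S *v z) = 0" using assms(2)[of "S *v z"] by (simp add: bf_def)
  hence "S *v z = 0" by simp
  thus ?thesis using inj_matrix_vector_mult[OF assms(1)] by (metis injD matrix_vector_mult_0_right)
qed


lemma core:
  fixes S :: "real^'n^'n" and x0 :: "real^'n" and G :: "(real^('n option)^('n option)) set"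
  assumes S: "pseudo_scalar_product S" and GE: "G \<subseteq> E_group S" and one: "mat 1 \<in> G"
    and op: "open ((\<lambda>A. aff_apply A x0) ` G)"
    and h: "h \<in> orth_group S"
    and comm: "\<And>Bm. Bm \<in> G \<Longrightarrow> aff_mat h c ** Bm = Bm ** aff_mat h c"
  shows "(h - mat 1) ** (h - mat 1) = 0" "(h - mat 1) *v c = 0"
    "\<And>s. mat 1 + s *\<^sub>R (h - mat 1) \<in> orth_group S"
proof -
  have tS: "transpose S = S" and iS: "invertible S" using S by (auto simp: pseudo_scalar_product_def)
  have sym: "bf S u w = bf S w u" for u w using bf_sym[OF tS] .
  define N where "N = h - mat 1"
  have hN: "h *v y = y + N *v y" for y by (simp add: N_def matrix_vector_mult_diff_rdistrib)
  define f where "f y = N *v y + c" for y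
  define Q where "Q y = bf S (f y) (f y)" for y
  define Orb where "Orb = (\<lambda>A. aff_apply A x0) ` G"
  have Qc: "Q y = Q x0" if yO: "y \<in> Orb" for y
  proof -
    obtain Bm where Bm: "Bm \<in> G" "y = aff_apply Bm x0" using yO Orb_def by auto
    then obtain g t where gt: "Bm = aff_mat g t" "g \<in> orth_group S" using GE by (auto simp: E_group_def)
    have y: "y = g *v x0 + t" using Bm gt by (simp add: aff_apply_aff)
    have "aff_mat (h ** g) (h *v t + c) = aff_mat (g ** h) (g *v c + t)"
      using comm[OF Bm(1)] gt by (simp add: aff_mult)
    hence hg: "h ** g = g ** h" and ht: "h *v t + c = g *v c + t" using aff_inj by blast+
    have "f y = g *v f x0"
    proof -
      have "f y = h *v y + c - y" by (simp add: f_def hN)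
      also have "\<dots> = (h ** g) *v x0 + (h *v t + c) - (g *v x0 + t)"
        by (simp add: y matrix_vector_right_distrib matrix_vector_mul_assoc)
      also have "\<dots> = (g ** h) *v x0 + (g *v c + t) - (g *v x0 + t)" by (simp only: hg ht)
      also have "\<dots> = g *v (h *v x0 + c - x0)"
        by (simp add: matrix_vector_right_distrib matrix_vector_mult_diff_distrib matrix_vector_mul_assoc)
      also have "\<dots> = g *v f x0" by (simp add: f_def hN)
      finally show ?thesis .
    qed
    thus ?thesis using orth_bf[OF gt(2)] by (simp add: Q_def)
  qed
  have "x0 = aff_apply (mat 1) x0" by (simp add: mat1_aff aff_apply_aff)
  hence x0O: "x0 \<in> Orb" using one unfolding Orb_def by blast
  obtain e where e: "e > 0" "ball x0 e \<subseteq> Orb" using op x0O Orb_def open_contains_ball by blast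
  have F: "bf S (N *v v) (N *v v) = 0 \<and> bf S (f x0) (N *v v) = 0" for v
  proof -
    define s where "s = e / (norm v + 1)"
    have n1: "norm v + 1 > 0" by (simp add: add_nonneg_pos)
    have s0: "s > 0" using e n1 by (simp add: s_def)
    have "s * (norm v + 1) = e" using n1 by (simp add: s_def)
    hence sn: "s * norm v < e" using s0 by (simp add: algebra_simps)
    have inP: "x0 + s *\<^sub>R v \<in> Orb" using e(2) sn s0 by (auto simp: dist_norm subset_iff)
    have inM: "x0 - s *\<^sub>R v \<in> Orb" using e(2) sn s0 by (auto simp: dist_norm subset_iff)
    define a where "a = f x0"
    define b where "b = N *v v"
    have fp: "f (x0 + s *\<^sub>R v) = a + s *\<^sub>R b"
      by (simp add: a_def b_def f_def matrix_vector_right_distrib matrix_vector_mult_scaleR)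
    have fm: "f (x0 - s *\<^sub>R v) = a - s *\<^sub>R b"
      by (simp add: a_def b_def f_def matrix_vector_mult_diff_distrib matrix_vector_mult_scaleR)
    have ba: "bf S b a = bf S a b" by (rule sym)
    have "Q (x0 + s *\<^sub>R v) = bf S a a + s * bf S a b + s * bf S b a + s * (s * bf S b b)"
      by (simp add: Q_def fp bf_simps algebra_simps)
    moreover have "Q (x0 - s *\<^sub>R v) = bf S a a - s * bf S a b - s * bf S b a + s * (s * bf S b b)"
      by (simp add: Q_def fm bf_simps algebra_simps)
    moreover have "Q x0 = bf S a a" by (simp add: Q_def a_def)
    ultimately have p: "s * bf S a b + s * bf S a b + s * (s * bf S b b) = 0"
      and m: "- s * bf S a b - s * bf S a b + s * (s * bf S b b) = 0"
      using Qc[OF inP] Qc[OF inM] ba by auto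
    have "s * (s * bf S b b) = 0" using p m by linarith
    hence bb: "bf S b b = 0" using s0 by simp
    have "s * bf S a b = 0" using p bb by simp
    hence "bf S a b = 0" using s0 by simp
    thus ?thesis using bb a_def b_def by simp
  qed
  have F1: "bf S (N *v v) (N *v w) = 0" for v w
  proof -
    have "bf S (N *v (v + w)) (N *v (v + w)) = 0" using F by blast
    hence "bf S (N *v v) (N *v w) + bf S (N *v w) (N *v v) = 0"
      using F[of v] F[of w] by (simp add: matrix_vector_right_distrib bf_simps)
    hence "bf S (N *v v) (N *v w) + bf S (N *v v) (N *v w) = 0" using sym by metis
    thus ?thesis by simp
  qed
  have F3: "bf S u (N *v w) + bf S (N *v u) w = 0" for u w
  proof -
    have "bf S (h *v u) (h *v w) = bf S u w" using orth_bf[OF h] .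
    thus ?thesis using F1[of u w] by (simp add: hN bf_simps)
  qed
  have NN: "N *v (N *v v) = 0" for v
  proof (rule bf_zero[OF iS])
    fix u show "bf S u (N *v (N *v v)) = 0" using F3[of u "N *v v"] F1[of u v] by simp
  qed
  show "(h - mat 1) ** (h - mat 1) = 0"
    unfolding N_def[symmetric] by (simp add: matrix_eq NN matrix_vector_mul_assoc[symmetric])
  have Nc: "N *v c = 0"
  proof (rule bf_zero[OF iS])
    fix u
    have "bf S (f x0) (N *v u) = 0" using F by blast
    hence "bf S c (N *v u) = 0" using F1[of x0 u] by (simp add: f_def bf_simps)
    hence "bf S (N *v c) u = 0" using F3[of c u] by simp
    thus "bf S u (N *v c) = 0" using sym by metis
  qed
  thus "(h - mat 1) *v c = 0" by (simp add: N_def)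
  fix s :: real
  show "mat 1 + s *\<^sub>R (h - mat 1) \<in> orth_group S"
  proof (rule bf_orth)
    fix u w
    have e: "(mat 1 + s *\<^sub>R (h - mat 1)) *v y = y + s *\<^sub>R (N *v y)" for y
      by (simp add: N_def[symmetric] matrix_vector_mult_add_rdistrib smv)
    show "bf S ((mat 1 + s *\<^sub>R (h - mat 1)) *v u) ((mat 1 + s *\<^sub>R (h - mat 1)) *v w) = bf S u w"
      unfolding e using F3[of u w] F1[of u w]
      by (simp add: bf_simps algebra_simps)
         (metis (no_types, lifting) add_diff_cancel_left' diff_add_cancel distrib_left mult_zero_right)
  qed
qed


lemma aff_sq:
  assumes "(h - mat 1) ** (h - mat 1) = 0" "(h - mat 1) *v c = 0"
  shows "(aff_mat h c - mat 1) ** (aff_mat h c - mat 1) = (0::real^('n::finite option)^('n option))"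
proof -
  define M where "M = aff_mat h c - (mat 1 :: real^('n option)^('n option))"
  define N where "N = h - mat 1"
  have M1: "M $ Some a $ Some b = N $ a $ b" for a b by (simp add: M_def N_def aff_mat_def mat_def)
  have M2: "M $ Some a $ None = c $ a" for a by (simp add: M_def aff_mat_def mat_def)
  have M3: "M $ None $ j = 0" for j by (simp add: M_def aff_mat_def mat_def split: option.splits)
  have NN: "(N ** N) $ a $ b = 0" for a b using assms(1) N_def by simp
  have Nc: "(N *v c) $ a = 0" for a using assms(2) N_def by simp
  have "(M ** M) $ i $ j = 0" for i j
  proof (cases i)
    case None thus ?thesis by (simp add: matrix_matrix_mult_def M3)
  next
    case (Some a)
    show ?thesis
    proof (cases j)
      case None thus ?thesis using Some Nc[of a]
        by (simp add: matrix_matrix_mult_def sum_option M1 M2 M3 matrix_vector_mult_def)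
    next
      case (Some b) thus ?thesis using \<open>i = Some a\<close> NN[of a b]
        by (simp add: matrix_matrix_mult_def sum_option M1 M2 M3)
    qed
  qed
  thus ?thesis unfolding M_def[symmetric] by (simp add: vec_eq_iff)
qed

lemma orth_mult: "g \<in> orth_group S \<Longrightarrow> g' \<in> orth_group S \<Longrightarrow> g ** g' \<in> orth_group S"
  by (rule bf_orth) (simp add: orth_bf matrix_vector_mul_assoc[symmetric])

lemma orth_one: "mat 1 \<in> orth_group S"
  by (simp add: orth_group_def)

theorem mainTheorem20:
  fixes S :: "real^'n^'n" and U :: "(real^'n) set"
    and G :: "(real^('n option)^('n option)) set"
  assumes "pseudo_scalar_product S"
    and "PR_affine_homogeneous_domain S U"
    and "matrix_subgroup G (Isom S U)"
    and "has_open_orbit G"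
  shows "connected (centraliser G (E_group S))
    \<and> matrix_subgroup (centraliser G (E_group S)) (E_group S)
    \<and> unipotent_group (centraliser G (E_group S))
    \<and> nilpotent_class_le_two (centraliser G (E_group S))
    \<and> (\<forall>A\<in>centraliser G (E_group S). (A - mat 1) ** (A - mat 1) = 0)"
proof -
  define Z where "Z = centraliser G (E_group S)"
  have GE: "G \<subseteq> E_group S" and one: "mat 1 \<in> G"
    using assms(3) by (auto simp: matrix_subgroup_def Isom_def)
  obtain x0 :: "real^'n" where op: "open ((\<lambda>A. aff_apply A x0) ` G)"
    using assms(4) by (auto simp: has_open_orbit_def)
  have Zchar: "\<exists>h c. A = aff_mat h c \<and> h \<in> orth_group S \<and> (h - mat 1) ** (h - mat 1) = 0
      \<and> (h - mat 1) *v c = 0 \<and> (\<forall>s. mat 1 + s *\<^sub>R (h - mat 1) \<in> orth_group S)" if "A \<in> Z" for A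
  proof -
    from that obtain h c where A: "A = aff_mat h c" "h \<in> orth_group S"
      and cm: "\<And>Bm. Bm \<in> G \<Longrightarrow> A ** Bm = Bm ** A"
      by (auto simp: Z_def centraliser_def E_group_def)
    note c = core[OF assms(1) GE one op A(2), of c]
    show ?thesis using A c cm by auto
  qed
  have ZE: "Z \<subseteq> E_group S" by (auto simp: Z_def centraliser_def)
  have Zcomm: "\<And>A Bm. A \<in> Z \<Longrightarrow> Bm \<in> G \<Longrightarrow> A ** Bm = Bm ** A" by (auto simp: Z_def centraliser_def)
  have Zin: "A \<in> Z" if "A \<in> E_group S" "\<And>Bm. Bm \<in> G \<Longrightarrow> A ** Bm = Bm ** A" for A
    using that by (auto simp: Z_def centraliser_def)
  have sq: "(A - mat 1) ** (A - mat 1) = 0" if "A \<in> Z" for A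
    using Zchar[OF that] aff_sq by blast
  have sc: "mat 1 + s *\<^sub>R (A - mat 1) \<in> Z" if a: "A \<in> Z" for A s
  proof (rule Zin)
    obtain h c where hc: "A = aff_mat h c" "\<forall>s. mat 1 + s *\<^sub>R (h - mat 1) \<in> orth_group S"
      using Zchar[OF a] by blast
    show "mat 1 + s *\<^sub>R (A - mat 1) \<in> E_group S"
      unfolding hc(1) aff_lin using hc(2) by (auto simp: E_group_def)
    fix Bm assume b: "Bm \<in> G"
    have "(mat 1 + s *\<^sub>R (A - mat 1)) ** Bm = Bm + s *\<^sub>R (A ** Bm - Bm)"
      by (simp add: matrix_add_rdistrib scalar_matrix_assoc[symmetric] matrix_sub_rdistrib)
    also have "\<dots> = Bm + s *\<^sub>R (Bm ** A - Bm)" using Zcomm[OF a b] by simp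
    also have "\<dots> = Bm ** (mat 1 + s *\<^sub>R (A - mat 1))"
      by (simp add: matrix_add_ldistrib matrix_scalar_ac matrix_sub_ldistrib scalar_matrix_assoc[symmetric] scaleR_right_diff_distrib)
    finally show "(mat 1 + s *\<^sub>R (A - mat 1)) ** Bm = Bm ** (mat 1 + s *\<^sub>R (A - mat 1))" .
  qed
  have mul: "A ** A' \<in> Z" if a: "A \<in> Z" and a': "A' \<in> Z" for A A'
  proof (rule Zin)
    obtain h c where "A = aff_mat h c" "h \<in> orth_group S" using a ZE by (auto simp: E_group_def)
    moreover obtain h' c' where "A' = aff_mat h' c'" "h' \<in> orth_group S" using a' ZE by (auto simp: E_group_def)
    ultimately show "A ** A' \<in> E_group S" by (auto simp: E_group_def aff_mult intro: orth_mult)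
    fix Bm assume b: "Bm \<in> G"
    have "A ** A' ** Bm = A ** (Bm ** A')" using Zcomm[OF a' b] by (simp flip: matrix_mul_assoc)
    also have "\<dots> = Bm ** A ** A'" using Zcomm[OF a b] by (simp add: matrix_mul_assoc)
    finally show "A ** A' ** Bm = Bm ** (A ** A')" by (simp add: matrix_mul_assoc)
  qed
  interpret Zgrp Z using sq sc mul by unfold_locales auto
  have oneZ: "mat 1 \<in> Z"
  proof (rule Zin)
    have "mat 1 = aff_mat (mat 1) 0 \<and> (mat 1 :: real^'n^'n) \<in> orth_group S"
      by (simp add: mat1_aff orth_one)
    thus "mat 1 \<in> E_group S" unfolding E_group_def by blast
  qed simp
  have sub: "matrix_subgroup Z (E_group S)"
    unfolding matrix_subgroup_def using ZE oneZ mul invZ neg by auto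
  show ?thesis using conn sub unip nil2 sq unfolding Z_def by blast
qed


end
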